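(* Let $s\ge1$ and $p\in F_{2,2s}$. Suppose $(a,b)$ and $(c,d)$ are both signatures of $p$ with $a>c$ and $b<d$. Then $a+d\ge s+3$, $b+c\ge s+1$, $\max\{a+b,c+d\}\ge s+2$, and $a,b,c,d\ge1$.
   Context: $F_{2,2s}$ is the space of real binary forms of degree $2s$ in $x,y$. A representation of $p\in F_{2,2s}$ is an expression $p=\sum_{j=1}^r\lambda_j(\alpha_jx+\beta_jy)^{2s}$ with $r\ge0$ (empty sum $=0$), $\alpha_j,\beta_j\in\mathbb R$, $0\ne\lambda_j\in\mathbb R$; it is honest if the linear forms $\alpha_jx+\beta_jy$ are pairwise non-proportional. Its badge is $(a,b)$ where $a=\#\{j:\lambda_j>0\}$, $b=\#\{j:\lambda_j<0\}$. $\mathcal B(p)$ is the set of badges of honest representations of $p$. Badges are ordered by $(a,b)\preceq(c,d)$ iff $a\le c$ and $b\le d$; a signature of $p$ is a minimal element of $\mathcal B(p)$ for $\preceq$. *)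

theory Defs
  imports Complex_Main
begin

text \<open>Real binary forms of degree d in x,y, viewed as functions of (x,y):
  p x y = sum_{k=0}^{d} c_k x^k y^(d-k).  F_{2,2s} is binary_form (2*s).\<close>
definition binary_form :: "nat \<Rightarrow> (real \<Rightarrow> real \<Rightarrow> real) \<Rightarrow> bool" where
  "binary_form d p \<longleftrightarrow> (\<exists>c :: nat \<Rightarrow> real. \<forall>x y. p x y = (\<Sum>k\<le>d. c k * x ^ k * y ^ (d - k)))"

definition is_rep :: "nat \<Rightarrow> (real \<Rightarrow> real \<Rightarrow> real) \<Rightarrow> (real \<times> real \<times> real) list \<Rightarrow> bool" where
  "is_rep s p L \<longleftrightarrow>
     (\<forall>t\<in>set L. fst t \<noteq> 0) \<and>
     (\<forall>x y. p x y = (\<Sum>(l, a, b)\<leftarrow>L. l * (a * x + b * y) ^ (2 * s)))"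

definition honest :: "(real \<times> real \<times> real) list \<Rightarrow> bool" where
  "honest L \<longleftrightarrow> (\<forall>i<length L. \<forall>j<length L. i \<noteq> j \<longrightarrow>
      (\<nexists>c. (fst (snd (L!i)) = c * fst (snd (L!j)) \<and> snd (snd (L!i)) = c * snd (snd (L!j))) \<or>
           (fst (snd (L!j)) = c * fst (snd (L!i)) \<and> snd (snd (L!j)) = c * snd (snd (L!i)))))"

definition badge :: "(real \<times> real \<times> real) list \<Rightarrow> nat \<times> nat" where
  "badge L = (length (filter (\<lambda>t. fst t > 0) L), length (filter (\<lambda>t. fst t < 0) L))"

definition badges :: "nat \<Rightarrow> (real \<Rightarrow> real \<Rightarrow> real) \<Rightarrow> (nat \<times> nat) set" where
  "badges s p = {badge L | L. is_rep s p L \<and> honest L}"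

definition badge_le :: "nat \<times> nat \<Rightarrow> nat \<times> nat \<Rightarrow> bool" where
  "badge_le u v \<longleftrightarrow> fst u \<le> fst v \<and> snd u \<le> snd v"

definition is_signature :: "nat \<Rightarrow> (real \<Rightarrow> real \<Rightarrow> real) \<Rightarrow> nat \<times> nat \<Rightarrow> bool" where
  "is_signature s p u \<longleftrightarrow> u \<in> badges s p \<and> (\<forall>v\<in>badges s p. badge_le v u \<longrightarrow> v = u)"

end

theory Submission
  imports Defs "HOL-Computational_Algebra.Polynomial" "HOL-Library.Multiset"
begin


definition lag :: "(nat \<Rightarrow> real) \<Rightarrow> nat \<Rightarrow> nat \<Rightarrow> real poly" where
  "lag t n i = (\<Prod>k\<in>{..<n}-{i}. [:- t k, 1:])"
definition PP :: "(nat \<Rightarrow> real) \<Rightarrow> nat \<Rightarrow> nat \<Rightarrow> real" where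
  "PP t n i = (\<Prod>k\<in>{..<n}-{i}. t i - t k)"

lemma poly_lag: "poly (lag t n i) x = (\<Prod>k\<in>{..<n}-{i}. x - t k)"
  by (simp add: lag_def poly_prod)

lemma degree_lag: "i < n \<Longrightarrow> degree (lag t n i) = n - 1"
  unfolding lag_def by (subst degree_prod_sum_eq) auto

lemma coeff_lag: "i < n \<Longrightarrow> coeff (lag t n i) (n - 1) = 1"
  using lead_coeff_prod[of "\<lambda>k. [:- t k, 1:]" "{..<n}-{i}"] degree_lag[of i n t]
  by (simp add: lag_def)

lemma PP_nz: "inj_on t {..<n} \<Longrightarrow> i < n \<Longrightarrow> PP t n i \<noteq> 0"
  unfolding PP_def by (auto simp: inj_on_def)

lemma poly_lag_other: "j < n \<Longrightarrow> j \<noteq> i \<Longrightarrow> poly (lag t n i) (t j) = 0"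
  unfolding poly_lag by (rule prod_zero) auto

lemma poly_lag_self: "poly (lag t n i) (t i) = PP t n i"
  unfolding poly_lag PP_def ..

lemma lagrange:
  assumes inj: "inj_on t {..<n}" and deg: "degree G < n"
  shows "G = (\<Sum>i<n. smult (poly G (t i) / PP t n i) (lag t n i))"
proof (rule poly_eqI_degree[of "t ` {..<n}"])
  have c: "card (t ` {..<n}) = n" using inj by (simp add: card_image)
  show "degree G < card (t ` {..<n})" using c deg by simp
  have "degree (\<Sum>i<n. smult (poly G (t i) / PP t n i) (lag t n i)) \<le> n - 1"
    by (rule degree_sum_le) (auto intro: order.trans[OF degree_smult_le] simp: degree_lag)
  then show "degree (\<Sum>i<n. smult (poly G (t i) / PP t n i) (lag t n i)) < card (t ` {..<n})"
    using c deg by linarith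
  fix x assume "x \<in> t ` {..<n}"
  then obtain j where j: "j < n" "x = t j" by auto
  have "poly (\<Sum>i<n. smult (poly G (t i) / PP t n i) (lag t n i)) x
      = (\<Sum>i<n. poly G (t i) / PP t n i * poly (lag t n i) (t j))"
    by (simp add: poly_sum j)
  also have "\<dots> = poly G (t j) / PP t n j * poly (lag t n j) (t j)"
    by (subst sum.remove[of _ j]) (use j in \<open>auto simp: poly_lag_other intro!: sum.neutral\<close>)
  also have "\<dots> = poly G x" using PP_nz[OF inj j(1)] j by (simp add: poly_lag_self)
  finally show "poly G x = poly (\<Sum>i<n. smult (poly G (t i) / PP t n i) (lag t n i)) x" by simp
qed

lemma divdiff:
  assumes inj: "inj_on t {..<m}" and deg: "degree g < m - 1"
  shows "(\<Sum>i<m. poly g (t i) / PP t m i) = 0"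
proof -
  have "g = (\<Sum>i<m. smult (poly g (t i) / PP t m i) (lag t m i))"
    by (rule lagrange[OF inj]) (use deg in linarith)
  then have "coeff g (m - 1) = (\<Sum>i<m. poly g (t i) / PP t m i * coeff (lag t m i) (m - 1))"
    by (metis (no_types, lifting) coeff_smult coeff_sum sum.cong)
  also have "\<dots> = (\<Sum>i<m. poly g (t i) / PP t m i)" by (rule sum.cong) (auto simp: coeff_lag[simplified])
  finally show ?thesis using deg by (simp add: coeff_eq_0)
qed

lemma PP_sign:
  assumes mono: "\<forall>i j. i < j \<longrightarrow> j < m \<longrightarrow> t i < t j" and im: "i < m"
  shows "PP t m i = (-1)^(m - 1 - i) * (\<Prod>k\<in>{..<m}-{i}. \<bar>t i - t k\<bar>)"
proof -
  have split: "{..<m}-{i} = {..<i} \<union> {i<..<m}" using im by auto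
  have d: "{..<i} \<inter> {i<..<m} = {}" by auto
  have A: "(\<Prod>k\<in>{..<i}. t i - t k) = (\<Prod>k\<in>{..<i}. \<bar>t i - t k\<bar>)"
  proof (rule prod.cong)
    fix k assume "k \<in> {..<i}"
    then have "t k < t i" using mono im by auto
    then show "t i - t k = \<bar>t i - t k\<bar>" by simp
  qed simp
  have "(\<Prod>k\<in>{i<..<m}. t i - t k) = (\<Prod>k\<in>{i<..<m}. (-1) * \<bar>t i - t k\<bar>)"
  proof (rule prod.cong)
    fix k assume "k \<in> {i<..<m}"
    then have "t i < t k" using mono im by auto
    then show "t i - t k = (-1) * \<bar>t i - t k\<bar>" by simp
  qed simp
  also have "\<dots> = (-1)^(m - 1 - i) * (\<Prod>k\<in>{i<..<m}. \<bar>t i - t k\<bar>)"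
    by (subst prod.distrib) simp
  finally have B: "(\<Prod>k\<in>{i<..<m}. t i - t k) = (-1)^(m - 1 - i) * (\<Prod>k\<in>{i<..<m}. \<bar>t i - t k\<bar>)" .
  show ?thesis unfolding PP_def split
    by (simp add: prod.union_disjoint[OF _ _ d] A B)
qed

lemma PP_alt:
  assumes mono: "\<forall>i j. i < j \<longrightarrow> j < m \<longrightarrow> t i < t j" and im: "Suc i < m"
  shows "PP t m i * PP t m (Suc i) < 0"
proof -
  have inj: "inj_on t {..<m}"
    by (rule inj_onI) (metis lessThan_iff linorder_neqE_nat mono order_less_irrefl)
  have p1: "(\<Prod>k\<in>{..<m}-{i}. \<bar>t i - t k\<bar>) > 0"
    by (rule prod_pos) (use inj im in \<open>auto simp: inj_on_def\<close>)
  have p2: "(\<Prod>k\<in>{..<m}-{Suc i}. \<bar>t (Suc i) - t k\<bar>) > 0"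
    by (rule prod_pos) (use inj im in \<open>auto simp: inj_on_def\<close>)
  have e: "m - 1 - i = Suc (m - 1 - Suc i)" using im by simp
  define k where "k = m - 1 - Suc i"
  define A where "A = (\<Prod>k\<in>{..<m}-{i}. \<bar>t i - t k\<bar>)"
  define B where "B = (\<Prod>k\<in>{..<m}-{Suc i}. \<bar>t (Suc i) - t k\<bar>)"
  have h: "(-1::real)^k * (-1)^k = 1" by (simp flip: power_mult_distrib)
  have "PP t m i * PP t m (Suc i) = (-1) * ((-1)^k * (-1)^k) * (A * B)"
    unfolding PP_sign[OF mono Suc_lessD[OF im]] PP_sign[OF mono im] A_def B_def k_def
    using e by (simp add: algebra_simps)
  also have "\<dots> < 0" using h p1 p2 unfolding A_def B_def by simp
  finally show ?thesis .
qed

lemma gauss: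
  fixes t w :: "nat \<Rightarrow> real" and n :: nat
  assumes n: "n \<ge> 1"
    and mono: "\<forall>i j. i < j \<longrightarrow> j < Suc n \<longrightarrow> t i < t j"
    and wpos: "\<forall>i<Suc n. w i > 0"
  shows "\<exists>r u. (\<forall>i j. i < j \<longrightarrow> j < n \<longrightarrow> r i < r j) \<and> (\<forall>j<n. u j > 0) \<and>
     (\<forall>f. degree f \<le> 2*n - 2 \<longrightarrow> (\<Sum>i<Suc n. w i * poly f (t i)) = (\<Sum>j<n. u j * poly f (r j)))"
proof -
  define m where "m = Suc n"
  have inj: "inj_on t {..<m}"
    by (rule inj_onI) (metis lessThan_iff linorder_neqE_nat mono order_less_irrefl m_def)
  have Pnz: "\<And>i. i < m \<Longrightarrow> PP t m i \<noteq> 0" using PP_nz[OF inj] by blast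
  define \<omega> where "\<omega> = (\<Sum>i<m. smult (1/(w i * (PP t m i)^2)) (lag t m i))"
  have \<omega>val: "poly \<omega> (t j) = 1/(w j * PP t m j)" if j: "j < m" for j
  proof -
    have "poly \<omega> (t j) = (\<Sum>i<m. 1/(w i * (PP t m i)^2) * poly (lag t m i) (t j))"
      by (simp add: \<omega>_def poly_sum)
    also have "\<dots> = 1/(w j * (PP t m j)^2) * poly (lag t m j) (t j)"
      by (subst sum.remove[of _ j]) (use j in \<open>auto simp: poly_lag_other intro!: sum.neutral\<close>)
    also have "\<dots> = 1/(w j * PP t m j)" using Pnz[OF j] wpos j
      by (simp add: poly_lag_self power2_eq_square m_def)
    finally show ?thesis .
  qed
  have coeffn: "coeff \<omega> n = (\<Sum>i<m. 1/(w i * (PP t m i)^2))"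
    unfolding \<omega>_def coeff_sum using coeff_lag[of _ m t] by (simp add: m_def)
  have "coeff \<omega> n > 0" unfolding coeffn
    by (rule sum_pos) (use wpos Pnz in \<open>auto simp: m_def\<close>)
  have degle: "degree \<omega> \<le> n"
    unfolding \<omega>_def
    by (rule degree_sum_le) (auto intro: order.trans[OF degree_smult_le] simp: degree_lag m_def)
  have deg\<omega>: "degree \<omega> = n"
    using degle \<open>coeff \<omega> n > 0\<close> le_degree by (metis antisym less_irrefl)
  have \<omega>nz: "\<omega> \<noteq> 0" using \<open>coeff \<omega> n > 0\<close> by auto
  have orth: "(\<Sum>i<m. w i * (poly \<omega> (t i) * poly g (t i))) = 0" if dg: "degree g < n" for g
  proof -
    have "(\<Sum>i<m. w i * (poly \<omega> (t i) * poly g (t i))) = (\<Sum>i<m. poly g (t i) / PP t m i)"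
      by (rule sum.cong) (use wpos in \<open>auto simp: \<omega>val m_def\<close>)
    also have "\<dots> = 0" by (rule divdiff[OF inj]) (use dg in \<open>simp add: m_def\<close>)
    finally show ?thesis .
  qed
  have "\<forall>j. j < n \<longrightarrow> (\<exists>x. t j < x \<and> x < t (Suc j) \<and> poly \<omega> x = 0)"
  proof (intro allI impI)
    fix j assume j: "j < n"
    have "PP t m j * PP t m (Suc j) < 0" by (rule PP_alt) (use mono j in \<open>auto simp: m_def\<close>)
    moreover have "w j > 0" "w (Suc j) > 0" using wpos j by auto
    ultimately have "poly \<omega> (t j) * poly \<omega> (t (Suc j)) < 0"
      using j by (simp add: \<omega>val m_def mult_neg_pos mult_pos_neg zero_less_mult_iff mult_less_0_iff)
    moreover have "t j < t (Suc j)" using mono j by auto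
    ultimately show "\<exists>x. t j < x \<and> x < t (Suc j) \<and> poly \<omega> x = 0"
      using poly_IVT by blast
  qed
  then obtain r where r: "\<And>j. j < n \<Longrightarrow> t j < r j \<and> r j < t (Suc j) \<and> poly \<omega> (r j) = 0"
    by metis
  have rmono: "\<forall>i j. i < j \<longrightarrow> j < n \<longrightarrow> r i < r j"
  proof (intro allI impI)
    fix i j assume ij: "i < j" "j < n"
    have "t (Suc i) \<le> t j"
    proof (cases "Suc i = j")
      case False
      then have "Suc i < j" using ij by simp
      then show ?thesis using mono ij by (simp add: less_imp_le)
    qed simp
    then show "r i < r j" using r[of i] r[of j] ij by auto
  qed
  have rinj: "inj_on r {..<n}"
    by (rule inj_onI) (metis lessThan_iff linorder_neqE_nat rmono order_less_irrefl)
  define Lf where "Lf f = (\<Sum>i<m. w i * poly f (t i))" for f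
  define l where "l j = smult (1 / PP r n j) (lag r n j)" for j
  define u where "u j = Lf (l j)" for j
  have rPnz: "\<And>j. j < n \<Longrightarrow> PP r n j \<noteq> 0" using PP_nz[OF rinj] by blast
  have lval: "poly (l j) (r k) = (if k = j then 1 else 0)" if "j < n" "k < n" for j k
    using that rPnz[of j] by (auto simp: l_def poly_lag_self poly_lag_other)
  have degl: "degree (l j) \<le> n - 1" if "j < n" for j
    using that degree_lag[of j n r] by (simp add: l_def)
  have quad: "Lf f = (\<Sum>j<n. u j * poly f (r j))" if df: "degree f \<le> 2*n - 2" for f
  proof -
    define g where "g = f div \<omega>"
    define h where "h = f mod \<omega>"
    have fgh: "f = \<omega> * g + h" unfolding g_def h_def by simp
    have dh: "degree h < n"
      using degree_mod_less[OF \<omega>nz, of f] n deg\<omega> by (auto simp: h_def)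
    have dg: "degree g < n"
    proof (cases "g = 0")
      case True then show ?thesis using n by simp
    next
      case False
      have "degree (\<omega> * g) = n + degree g" using False \<omega>nz deg\<omega> by (simp add: degree_mult_eq)
      moreover have "\<omega> * g = f - h" using fgh by simp
      moreover have "degree (f - h) \<le> max (degree f) (degree h)" by (rule degree_diff_le_max)
      ultimately have "n + degree g \<le> max (degree f) (degree h)" by simp
      moreover have "max (degree f) (degree h) \<le> 2*n - 2" using df dh n by simp
      ultimately show ?thesis using n by linarith
    qed
    have "Lf f = (\<Sum>i<m. w i * (poly \<omega> (t i) * poly g (t i))) + Lf h"
      unfolding Lf_def by (subst fgh) (simp add: algebra_simps sum.distrib)
    also have "\<dots> = Lf h" using orth[OF dg] by simp
    finally have e1: "Lf f = Lf h" .
    have hexp: "h = (\<Sum>j<n. smult (poly h (r j) / PP r n j) (lag r n j))"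
      by (rule lagrange[OF rinj dh])
    define c where "c j = poly h (r j)" for j
    have hx: "poly h x = (\<Sum>j<n. c j * poly (l j) x)" for x
      by (subst hexp) (simp add: poly_sum l_def c_def)
    have "Lf h = (\<Sum>i<m. w i * (\<Sum>j<n. c j * poly (l j) (t i)))"
      unfolding Lf_def by (simp only: hx)
    also have "\<dots> = (\<Sum>i<m. \<Sum>j<n. c j * (w i * poly (l j) (t i)))"
      by (simp add: sum_distrib_left algebra_simps)
    also have "\<dots> = (\<Sum>j<n. \<Sum>i<m. c j * (w i * poly (l j) (t i)))"
      by (rule sum.swap)
    also have "\<dots> = (\<Sum>j<n. c j * Lf (l j))"
      unfolding Lf_def by (simp add: sum_distrib_left)
    also have "\<dots> = (\<Sum>j<n. u j * poly f (r j))"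
    proof (rule sum.cong)
      fix j assume "j \<in> {..<n}"
      then have "poly f (r j) = poly h (r j)" using r[of j] fgh by simp
      then show "c j * Lf (l j) = u j * poly f (r j)" by (simp add: u_def c_def)
    qed simp
    finally show ?thesis using e1 by simp
  qed
  have upos: "u j > 0" if j: "j < n" for j
  proof -
    have "degree ((l j)^2) \<le> 2*n - 2"
      using degree_power_le[of "l j" 2] degl[OF j] n by simp
    then have "Lf ((l j)^2) = (\<Sum>k<n. u k * poly ((l j)^2) (r k))" by (rule quad)
    also have "\<dots> = u j"
      by (subst sum.remove[of _ j]) (use j in \<open>auto simp: lval intro!: sum.neutral\<close>)
    finally have eq: "Lf ((l j)^2) = u j" .
    have nz: "\<exists>i<m. poly (l j) (t i) \<noteq> 0"
    proof (rule ccontr)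
      assume "\<not> ?thesis"
      then have "l j = 0"
        by (intro poly_eqI_degree[of "t ` {..<m}"])
           (use inj degl[OF j] in \<open>auto simp: card_image m_def\<close>)
      then show False using lval[OF j j] by simp
    qed
    then obtain i where i: "i < m" "poly (l j) (t i) \<noteq> 0" by blast
    have "Lf ((l j)^2) > 0" unfolding Lf_def
    proof (rule sum_pos2[of _ i])
      show "w i * poly ((l j)^2) (t i) > 0" using i wpos by (simp add: m_def)
      fix k assume "k \<in> {..<m}" then show "0 \<le> w k * poly ((l j)^2) (t k)"
        using wpos by (simp add: m_def less_imp_le)
    qed (use i in auto)
    then show ?thesis using eq by simp
  qed
  show ?thesis
    apply (rule exI[of _ r], rule exI[of _ u])
    using rmono upos quad by (simp add: Lf_def m_def)
qed



definition F :: "(real \<times> real \<times> real) list \<Rightarrow> nat \<Rightarrow> real \<Rightarrow> real \<Rightarrow> real" where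
  "F L n x y = (\<Sum>(l, a, b)\<leftarrow>L. l * (a * x + b * y) ^ n)"

definition Gx :: "(real \<times> real \<times> real) list \<Rightarrow> nat \<Rightarrow> real \<Rightarrow> real \<Rightarrow> real" where
  "Gx L n x y = (\<Sum>(l, a, b)\<leftarrow>L. l * a * (a * x + b * y) ^ n)"
definition Gy :: "(real \<times> real \<times> real) list \<Rightarrow> nat \<Rightarrow> real \<Rightarrow> real \<Rightarrow> real" where
  "Gy L n x y = (\<Sum>(l, a, b)\<leftarrow>L. l * b * (a * x + b * y) ^ n)"

lemma F_Cons[simp]: "F ((l,a,b)#L) n x y = l * (a * x + b * y) ^ n + F L n x y"
  by (simp add: F_def)
lemma F_Nil[simp]: "F [] n x y = 0" by (simp add: F_def)
lemma Gx_Cons[simp]: "Gx ((l,a,b)#L) n x y = l * a * (a * x + b * y) ^ n + Gx L n x y"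
  by (simp add: Gx_def)
lemma Gx_Nil[simp]: "Gx [] n x y = 0" by (simp add: Gx_def)
lemma Gy_Cons[simp]: "Gy ((l,a,b)#L) n x y = l * b * (a * x + b * y) ^ n + Gy L n x y"
  by (simp add: Gy_def)
lemma Gy_Nil[simp]: "Gy [] n x y = 0" by (simp add: Gy_def)

lemma F_deriv_x: "((\<lambda>x. F L (Suc n) x y) has_real_derivative (Suc n) * Gx L n x y) (at x)"
proof (induction L)
  case Nil then show ?case by simp
next
  case (Cons t L)
  obtain l a b where t: "t = (l,a,b)" by (cases t) auto
  have d: "((\<lambda>x. l * (a * x + b * y) ^ Suc n) has_real_derivative
            l * (real (Suc n) * (a * x + b * y) ^ n * a)) (at x)"
  proof -
    have "((\<lambda>x. a * x + b * y) has_real_derivative a) (at x)"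
      by (auto intro!: derivative_eq_intros)
    from DERIV_cmult[OF DERIV_power_Suc[OF this, of n], of l]
    show ?thesis by (simp add: algebra_simps)
  qed
  show ?case unfolding t F_Cons Gx_Cons
    using DERIV_add[OF d Cons.IH] by (simp add: algebra_simps)
qed

lemma F_deriv_y: "((\<lambda>y. F L (Suc n) x y) has_real_derivative (Suc n) * Gy L n x y) (at y)"
proof (induction L)
  case Nil then show ?case by simp
next
  case (Cons t L)
  obtain l a b where t: "t = (l,a,b)" by (cases t) auto
  have d: "((\<lambda>y. l * (a * x + b * y) ^ Suc n) has_real_derivative
            l * (real (Suc n) * (a * x + b * y) ^ n * b)) (at y)"
  proof -
    have "((\<lambda>y. a * x + b * y) has_real_derivative b) (at y)"
      by (auto intro!: derivative_eq_intros)
    from DERIV_cmult[OF DERIV_power_Suc[OF this, of n], of l]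
    show ?thesis by (simp add: algebra_simps)
  qed
  show ?case unfolding t F_Cons Gy_Cons
    using DERIV_add[OF d Cons.IH] by (simp add: algebra_simps)
qed

definition killL :: "real \<times> real \<Rightarrow> (real \<times> real \<times> real) list \<Rightarrow> (real \<times> real \<times> real) list" where
  "killL k L = map (\<lambda>(l,a,b). (l * (a * snd k - b * fst k), a, b)) L"

lemma F_killL: "F (killL k L) n x y = snd k * Gx L n x y - fst k * Gy L n x y"
  by (induction L) (auto simp: killL_def algebra_simps)

lemma kill1:
  assumes "\<forall>x y. F L (Suc n) x y = 0"
  shows "\<forall>x y. F (killL k L) n x y = 0"
proof (intro allI)
  fix x y
  have z: "(\<lambda>x. F L (Suc n) x y) = (\<lambda>_. 0)" "(\<lambda>y. F L (Suc n) x y) = (\<lambda>_. 0)" using assms by auto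
  have "(Suc n) * Gx L n x y = 0"
    using DERIV_unique[OF F_deriv_x[of L n y x]] z(1) by (metis DERIV_const)
  then have gx: "Gx L n x y = 0" by simp
  have "(Suc n) * Gy L n x y = 0"
    using DERIV_unique[OF F_deriv_y[of L n x y]] z(2) by (metis DERIV_const)
  then have gy: "Gy L n x y = 0" by simp
  show "F (killL k L) n x y = 0" by (simp add: F_killL gx gy)
qed

definition killAll :: "(real \<times> real) list \<Rightarrow> (real \<times> real \<times> real) list \<Rightarrow> (real \<times> real \<times> real) list" where
  "killAll ks L = map (\<lambda>(l,a,b). (l * (\<Prod>k\<leftarrow>ks. (a * snd k - b * fst k)^2), a, b)) L"

lemma killAll_Cons: "killAll (k#ks) L = killL k (killL k (killAll ks L))"
  by (simp add: killAll_def killL_def case_prod_beta power2_eq_square algebra_simps)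

lemma killAll_rel:
  assumes "\<forall>x y. F L (n + 2 * length ks) x y = 0"
  shows "\<forall>x y. F (killAll ks L) n x y = 0"
  using assms
proof (induction ks arbitrary: n)
  case Nil then show ?case by (simp add: killAll_def case_prod_beta)
next
  case (Cons k ks)
  have "\<forall>x y. F L (Suc (Suc n) + 2 * length ks) x y = 0" using Cons.prems by simp
  then have "\<forall>x y. F (killAll ks L) (Suc (Suc n)) x y = 0" by (rule Cons.IH)
  then have "\<forall>x y. F (killL k (killAll ks L)) (Suc n) x y = 0" by (rule kill1)
  then have "\<forall>x y. F (killL k (killL k (killAll ks L))) n x y = 0" by (rule kill1)
  then show ?case by (simp add: killAll_Cons)
qed

lemma prod_list_pos': "(\<forall>x\<in>set xs. (0::real) < x) \<Longrightarrow> 0 < prod_list xs"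
  by (induction xs) auto

lemma parallel_killer:
  assumes rel: "\<forall>x y. F L (2 * s) x y = 0"
    and len: "length ks \<le> s"
    and neg: "\<forall>(l,a,b)\<in>set L. l < 0 \<longrightarrow> (a,b) \<in> set ks"
    and mem: "(l0,a0,b0) \<in> set L" and l0: "l0 > 0" and nz: "(a0,b0) \<noteq> (0,0)"
  shows "\<exists>k\<in>set ks. a0 * snd k - b0 * fst k = 0"
proof (rule ccontr)
  assume nk: "\<not> ?thesis"
  define n where "n = 2 * (s - length ks)"
  have "2 * s = n + 2 * length ks" using len by (simp add: n_def)
  then have "\<forall>x y. F (killAll ks L) n x y = 0" using killAll_rel[of L n ks] rel by simp
  then have z: "F (killAll ks L) n a0 b0 = 0" by blast
  define trm where "trm = (\<lambda>(l::real,a::real,b::real). l * (\<Prod>k\<leftarrow>ks. (a * snd k - b * fst k)^2) * (a * a0 + b * b0) ^ n)"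
  have Feq: "F (killAll ks L) n a0 b0 = sum_list (map trm L)"
    unfolding F_def killAll_def map_map trm_def
    by (rule arg_cong[where f=sum_list], rule map_cong) auto
  have nonneg: "\<forall>v\<in>set (map trm L). 0 \<le> v"
  proof
    fix v assume "v \<in> set (map trm L)"
    then obtain l a b where lab: "(l,a,b) \<in> set L" "v = trm (l,a,b)" by auto
    have pw: "0 \<le> (a * a0 + b * b0) ^ n" by (simp add: n_def power_mult)
    have pr: "0 \<le> (\<Prod>k\<leftarrow>ks. (a * snd k - b * fst k)^2)" by (rule prod_list_nonneg) auto
    show "0 \<le> v"
    proof (cases "l < 0")
      case True
      then have "(a,b) \<in> set ks" using neg lab(1) by auto
      then have "(\<Prod>k\<leftarrow>ks. (a * snd k - b * fst k)^2) = 0"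
        by (auto simp: prod_list_zero_iff image_iff intro!: bexI[of _ "(a,b)"])
      then show ?thesis using lab by (simp add: trm_def)
    next
      case False
      then show ?thesis using lab pw pr by (simp add: trm_def)
    qed
  qed
  have pos: "trm (l0,a0,b0) > 0"
  proof -
    have "(\<Prod>k\<leftarrow>ks. (a0 * snd k - b0 * fst k)^2) > 0"
      by (rule prod_list_pos') (use nk in auto)
    moreover have "(a0 * a0 + b0 * b0) > 0" using nz
      by (metis add_pos_nonneg add_nonneg_pos not_real_square_gt_zero prod.inject zero_le_square)
    ultimately show ?thesis using l0 by (simp add: trm_def)
  qed
  have "trm (l0,a0,b0) \<le> sum_list (map trm L)"
    by (rule member_le_sum_list) (use mem nonneg in auto)
  then show False using z Feq pos by simp
qed



definition prp :: "real \<times> real \<Rightarrow> real \<times> real \<Rightarrow> bool" where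
  "prp u v \<longleftrightarrow> (\<exists>c. (fst u = c * fst v \<and> snd u = c * snd v) \<or> (fst v = c * fst u \<and> snd v = c * snd u))"
definition dt :: "real \<times> real \<Rightarrow> real \<times> real \<Rightarrow> real" where
  "dt u v = fst u * snd v - snd u * fst v"

lemma honest_alt: "honest L \<longleftrightarrow> (\<forall>i<length L. \<forall>j<length L. i \<noteq> j \<longrightarrow> \<not> prp (snd (L!i)) (snd (L!j)))"
  unfolding honest_def prp_def by blast

lemma prp_sym: "prp u v \<longleftrightarrow> prp v u" unfolding prp_def by blast

lemma prp_dt: "prp u v \<Longrightarrow> dt u v = 0"
  unfolding prp_def dt_def by (auto simp: algebra_simps)

lemma dt0_mult:
  assumes "dt u v = 0" "v \<noteq> (0,0)"
  shows "\<exists>c. fst u = c * fst v \<and> snd u = c * snd v"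
proof (cases "fst v = 0")
  case True
  then have "snd v \<noteq> 0" using assms(2) by (cases v) auto
  then show ?thesis using assms(1) True
    by (intro exI[of _ "snd u / snd v"]) (auto simp: dt_def field_simps)
next
  case False
  then show ?thesis using assms(1)
    by (intro exI[of _ "fst u / fst v"]) (auto simp: dt_def field_simps)
qed

lemma dt0_prp: "dt u v = 0 \<Longrightarrow> v \<noteq> (0,0) \<Longrightarrow> prp u v"
  using dt0_mult unfolding prp_def by blast

lemma dt_trans:
  assumes "dt u w = 0" "dt v w = 0" "w \<noteq> (0,0)"
  shows "dt u v = 0"
proof -
  have "dt u v * fst w = fst v * dt u w - fst u * dt v w"
       "dt u v * snd w = snd v * dt u w - snd u * dt v w"
    by (simp_all add: dt_def algebra_simps)
  then have "dt u v * fst w = 0" "dt u v * snd w = 0" using assms(1,2) by simp_all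
  then show ?thesis using assms(3) by (cases w) auto
qed

lemma honest_dt:
  assumes "honest L" "i < length L" "j < length L" "i \<noteq> j" "snd (L!j) \<noteq> (0,0)"
  shows "dt (snd (L!i)) (snd (L!j)) \<noteq> 0"
  using assms dt0_prp unfolding honest_alt by blast

lemma honest_Cons: "honest (t#L) \<longleftrightarrow> honest L \<and> (\<forall>j<length L. \<not> prp (snd t) (snd (L!j)))"
  unfolding honest_alt
  by (auto simp: nth_Cons split: nat.splits; metis prp_sym Suc_less_eq nat.inject)

lemma honest_update:
  assumes "honest L" "j < length L" "snd v = snd (L!j)"
  shows "honest (L[j := v])"
  using assms unfolding honest_alt by (auto simp: nth_list_update)

lemma honest_take: "honest L \<Longrightarrow> honest (take k L)"
  unfolding honest_alt by auto

lemma honest_nz: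
  assumes "honest L" "length L \<ge> 2" "t \<in> set L"
  shows "snd t \<noteq> (0,0)"
proof
  assume z: "snd t = (0,0)"
  obtain i where i: "i < length L" "L!i = t" using assms(3) by (auto simp: in_set_conv_nth)
  define j where "j = (if i = 0 then 1 else 0::nat)"
  have j: "j < length L" "j \<noteq> i" using assms(2) by (auto simp: j_def)
  have "prp (snd (L!i)) (snd (L!j))" using z i unfolding prp_def by (auto intro!: exI[of _ 0])
  then show False using assms(1) i j unfolding honest_alt by auto
qed

lemma F_append: "F (L1 @ L2) n x y = F L1 n x y + F L2 n x y"
  by (simp add: F_def)

lemma F_update:
  "j < length L \<Longrightarrow> F (L[j := v]) n x y = F L n x y - (case L!j of (l,a,b) \<Rightarrow> l * (a*x+b*y)^n) + (case v of (l,a,b) \<Rightarrow> l * (a*x+b*y)^n)"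
proof (induction L arbitrary: j)
  case Nil then show ?case by simp
next
  case (Cons t L)
  then show ?case
    by (cases j) (auto simp: F_def split: prod.splits)
qed

lemma merge_pos:
  assumes "\<forall>t\<in>set M. fst t > 0 \<and> snd t \<noteq> (0,0)"
  shows "\<exists>M'. honest M' \<and> (\<forall>t\<in>set M'. fst t > 0 \<and> snd t \<noteq> (0,0)) \<and> length M' \<le> length M \<and>
     (\<forall>x y. F M' (2*s) x y = F M (2*s) x y)"
  using assms
proof (induction M)
  case Nil then show ?case by (intro exI[of _ "[]"]) (auto simp: honest_def)
next
  case (Cons t M)
  then obtain M' where M': "honest M'" "\<forall>t\<in>set M'. fst t > 0 \<and> snd t \<noteq> (0,0)" "length M' \<le> length M"
     "\<forall>x y. F M' (2*s) x y = F M (2*s) x y" by auto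
  obtain l a b where t: "t = (l,a,b)" by (cases t) auto
  have tl: "l > 0" "(a,b) \<noteq> (0,0)" using Cons.prems t by auto
  show ?case
  proof (cases "\<exists>j<length M'. dt (snd t) (snd (M'!j)) = 0")
    case True
    then obtain j where j: "j < length M'" "dt (snd t) (snd (M'!j)) = 0" by blast
    obtain l' p q where mj: "M'!j = (l',p,q)" by (cases "M'!j") auto
    have mjp: "l' > 0" "(p,q) \<noteq> (0,0)" using M'(2) j(1) mj by (metis nth_mem fst_conv snd_conv)+
    obtain c where c: "a = c * p" "b = c * q" using dt0_mult[OF j(2)] mj mjp t by auto
    define M'' where "M'' = M'[j := (l' + l * c^(2*s), p, q)]"
    show ?thesis
    proof (intro exI[of _ M''] conjI)
      show "honest M''" unfolding M''_def by (rule honest_update) (use M' j mj in auto)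
      have "0 \<le> l * c^(2*s)" using tl by (simp add: power_mult)
      then show "\<forall>t\<in>set M''. fst t > 0 \<and> snd t \<noteq> (0,0)"
        using M'(2) mjp unfolding M''_def by (auto dest!: set_update_subset_insert[THEN subsetD])
      show "length M'' \<le> length (t # M)" using M'(3) by (simp add: M''_def)
      show "\<forall>x y. F M'' (2*s) x y = F (t # M) (2*s) x y"
      proof (intro allI)
        fix x y
        have "(a*x+b*y)^(2*s) = c^(2*s) * (p*x+q*y)^(2*s)"
          by (simp add: c power_mult_distrib[symmetric] algebra_simps)
        then show "F M'' (2*s) x y = F (t # M) (2*s) x y"
          unfolding M''_def using j(1) M'(4) by (simp add: F_update mj t algebra_simps)
      qed
    qed
  next
    case False
    show ?thesis
    proof (intro exI[of _ "t # M'"] conjI)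
      show "honest (t # M')" unfolding honest_Cons using M'(1) False prp_dt by blast
      show "\<forall>t\<in>set (t # M'). fst t > 0 \<and> snd t \<noteq> (0,0)" using M'(2) Cons.prems by auto
      show "length (t # M') \<le> length (t # M)" using M'(3) by simp
      show "\<forall>x y. F (t # M') (2*s) x y = F (t # M) (2*s) x y" using M'(4) t by simp
    qed
  qed
qed

lemma gauss_forms:
  assumes s1: "s \<ge> 1" and hon: "honest L" and pos: "\<forall>t\<in>set L. fst t > 0 \<and> snd t \<noteq> (0,0)"
    and len: "length L = s + 2"
  shows "\<exists>N. length N = s + 1 \<and> (\<forall>t\<in>set N. fst t > 0 \<and> snd t \<noteq> (0,0)) \<and>
             (\<forall>x y. F N (2*s) x y = F L (2*s) x y)"
proof -
  define S where "S = (\<lambda>t. - snd (snd t) / fst (snd t)) ` set L"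
  have "finite S" by (simp add: S_def)
  then obtain r0 :: real where r0S: "r0 \<notin> S" using ex_new_if_finite[OF infinite_UNIV_char_0] by blast
  define \<gamma> where "\<gamma> t = snd (snd t) + r0 * fst (snd t)" for t :: "real \<times> real \<times> real"
  have \<gamma>nz: "\<gamma> t \<noteq> 0" if "t \<in> set L" for t
  proof
    assume g0: "\<gamma> t = 0"
    show False
    proof (cases "fst (snd t) = 0")
      case True
      then have "snd (snd t) = 0" using g0 by (simp add: \<gamma>_def)
      then show False using True pos that by (cases "snd t") auto
    next
      case False
      then have "r0 = - snd (snd t) / fst (snd t)" using g0 by (simp add: \<gamma>_def field_simps)
      then show False using r0S that by (auto simp: S_def)
    qed
  qed
  define \<tau> where "\<tau> t = fst (snd t) / \<gamma> t" for t
  define wt where "wt t = fst t * (\<gamma> t)^(2*s)" for t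
  have key: "fst t * (fst (snd t) * x + snd (snd t) * y)^(2*s) = wt t * (\<tau> t * (x - r0*y) + y)^(2*s)"
    if t: "t \<in> set L" for t x y
  proof -
    have "fst (snd t) * x + snd (snd t) * y = \<gamma> t * (\<tau> t * (x - r0*y) + y)"
      using \<gamma>nz[OF t] by (simp add: \<tau>_def \<gamma>_def field_simps)
    then show ?thesis by (simp add: wt_def power_mult_distrib)
  qed
  have wtpos: "wt t > 0" if "t \<in> set L" for t
    using \<gamma>nz[OF that] pos that by (simp add: wt_def power_mult)
  have dist: "distinct (map \<tau> L)"
  proof (subst distinct_conv_nth, intro allI impI)
    fix i j assume ij: "i < length (map \<tau> L)" "j < length (map \<tau> L)" "i \<noteq> j"
    show "map \<tau> L ! i \<noteq> map \<tau> L ! j"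
    proof
      assume eq: "map \<tau> L ! i = map \<tau> L ! j"
      define ti tj where "ti = L!i" and "tj = L!j"
      have mem: "ti \<in> set L" "tj \<in> set L" using ij by (auto simp: ti_def tj_def)
      have eq': "\<tau> ti = \<tau> tj" using eq ij by (simp add: ti_def tj_def)
      have gi: "\<gamma> ti \<noteq> 0" and gj: "\<gamma> tj \<noteq> 0" using \<gamma>nz mem by auto
      have ai: "fst (snd ti) = \<tau> ti * \<gamma> ti" and aj: "fst (snd tj) = \<tau> tj * \<gamma> tj"
        using gi gj by (simp_all add: \<tau>_def)
      have bi: "snd (snd ti) = \<gamma> ti - r0 * fst (snd ti)" and bj: "snd (snd tj) = \<gamma> tj - r0 * fst (snd tj)"
        by (simp_all add: \<gamma>_def)
      have "prp (snd ti) (snd tj)"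
        unfolding prp_def
        by (rule exI[of _ "\<gamma> ti / \<gamma> tj"], rule disjI1)
           (use gj eq' in \<open>simp add: bi bj ai aj field_simps\<close>)
      then show False using hon ij unfolding honest_alt by (auto simp: ti_def tj_def)
    qed
  qed
  define P where "P = map (\<lambda>t. (\<tau> t, wt t)) L"
  define Ps where "Ps = sort_key fst P"
  define tt where "tt i = fst (Ps ! i)" for i
  define ww where "ww i = snd (Ps ! i)" for i
  have lenPs: "length Ps = s + 2" by (simp add: Ps_def P_def len)
  have "mset (map fst Ps) = mset (map fst P)" by (simp add: Ps_def)
  moreover have "distinct (map fst P)" using dist by (simp add: P_def o_def)
  ultimately have "distinct (map fst Ps)" using mset_eq_imp_distinct_iff by blast
  moreover have "sorted (map fst Ps)" by (simp add: Ps_def)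
  ultimately have sw: "sorted_wrt (<) (map fst Ps)" by (simp add: strict_sorted_iff)
  have mono: "\<forall>i j. i < j \<longrightarrow> j < Suc (s+1) \<longrightarrow> tt i < tt j"
  proof (intro allI impI)
    fix i j assume "i < j" "j < Suc (s+1)"
    then show "tt i < tt j" using sorted_wrt_nth_less[OF sw, of i j] lenPs by (simp add: tt_def)
  qed
  have wpos: "\<forall>i<Suc (s+1). ww i > 0"
  proof (intro allI impI)
    fix i assume "i < Suc (s+1)"
    then have "i < length Ps" using lenPs by simp
    then have "Ps ! i \<in> set Ps" by (rule nth_mem)
    then have "Ps ! i \<in> set P" by (simp add: Ps_def)
    then show "ww i > 0" using wtpos by (auto simp: ww_def P_def)
  qed
  obtain r u where ru: "\<forall>i j. i < j \<longrightarrow> j < s+1 \<longrightarrow> r i < r j" "\<forall>j<s+1. u j > 0"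
    "\<forall>f. degree f \<le> 2*(s+1) - 2 \<longrightarrow> (\<Sum>i<Suc (s+1). ww i * poly f (tt i)) = (\<Sum>j<s+1. u j * poly f (r j))"
    using gauss[OF _ mono wpos] by auto
  define N where "N = map (\<lambda>j. (u j, r j, 1 - r0 * r j)) [0..<s+1]"
  show ?thesis
  proof (intro exI[of _ N] conjI allI)
    show "length N = s + 1" by (simp add: N_def)
    show "\<forall>t\<in>set N. fst t > 0 \<and> snd t \<noteq> (0,0)"
      using ru(2) by (auto simp: N_def)
    fix x y
    define X where "X = x - r0 * y"
    define f where "f = [:y, X:]^(2*s)"
    have pf: "poly f z = (z * X + y)^(2*s)" for z by (simp add: f_def poly_power algebra_simps)
    have df: "degree f \<le> 2*(s+1) - 2"
    proof -
      have d1: "degree [:y, X:] \<le> 1" by simp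
      have "degree f \<le> degree [:y, X:] * (2*s)" unfolding f_def by (rule degree_power_le)
      also have "\<dots> \<le> 1 * (2*s)" by (rule mult_right_mono[OF d1]) simp
      finally show ?thesis by simp
    qed
    have "F N (2*s) x y = (\<Sum>j<s+1. u j * (r j * x + (1 - r0 * r j) * y)^(2*s))"
      by (simp add: N_def F_def interv_sum_list_conv_sum_set_nat atLeast0LessThan o_def)
    also have "\<dots> = (\<Sum>j<s+1. u j * poly f (r j))"
      by (rule sum.cong) (simp_all add: pf X_def algebra_simps)
    also have "\<dots> = (\<Sum>i<Suc (s+1). ww i * poly f (tt i))" using ru(3) df by simp
    also have "\<dots> = sum_list (map (\<lambda>p. snd p * poly f (fst p)) Ps)"
      by (simp add: sum_list_sum_nth lenPs atLeast0LessThan ww_def tt_def)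
    also have "\<dots> = sum_list (map (\<lambda>p. snd p * poly f (fst p)) P)"
    proof -
      have "mset (map (\<lambda>p. snd p * poly f (fst p)) Ps) = mset (map (\<lambda>p. snd p * poly f (fst p)) P)"
        by (simp add: Ps_def)
      from arg_cong[OF this, of sum_mset] show ?thesis by (simp only: sum_mset_sum_list)
    qed
    also have "\<dots> = sum_list (map (\<lambda>t. fst t * (fst (snd t) * x + snd (snd t) * y)^(2*s)) L)"
      unfolding P_def map_map
    proof (rule arg_cong[where f=sum_list], rule map_cong)
      fix t assume t: "t \<in> set L"
      have "poly f (\<tau> t) = (\<tau> t * (x - r0*y) + y)^(2*s)" by (simp add: pf X_def)
      then show "((\<lambda>p. snd p * poly f (fst p)) \<circ> (\<lambda>t. (\<tau> t, wt t))) t =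
          fst t * (fst (snd t) * x + snd (snd t) * y)^(2*s)"
        using key[OF t, of x y] by simp
    qed simp
    also have "\<dots> = F L (2*s) x y"
      unfolding F_def by (rule arg_cong[where f=sum_list], rule map_cong) auto
    finally show "F N (2*s) x y = F L (2*s) x y" .
  qed
qed



lemma rep_F: "is_rep s p L \<longleftrightarrow> (\<forall>t\<in>set L. fst t \<noteq> 0) \<and> (\<forall>x y. p x y = F L (2*s) x y)"
  by (simp add: is_rep_def F_def)

lemma badge_pos: "\<forall>t\<in>set M. fst t > 0 \<Longrightarrow> badge M = (length M, 0)"
proof -
  assume a: "\<forall>t\<in>set M. fst t > 0"
  then have "filter (\<lambda>t. fst t > 0) M = M" by (simp add: filter_id_conv)
  moreover have "filter (\<lambda>t. fst t < 0) M = []" using a by (auto simp: filter_empty_conv)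
  ultimately show ?thesis by (simp add: badge_def)
qed

lemma reduce:
  assumes s1: "s \<ge> 1" and rep: "\<forall>x y. p x y = F L (2*s) x y" and hon: "honest L"
    and pos: "\<forall>t\<in>set L. fst t > 0 \<and> snd t \<noteq> (0,0)" and len: "length L \<ge> s + 2"
  shows "\<exists>M. (\<forall>x y. p x y = F M (2*s) x y) \<and> honest M \<and> (\<forall>t\<in>set M. fst t > 0 \<and> snd t \<noteq> (0,0))
            \<and> length M < length L"
proof -
  define L1 where "L1 = take (s+2) L"
  define R where "R = drop (s+2) L"
  have LL: "L = L1 @ R" by (simp add: L1_def R_def)
  have pos1: "\<forall>t\<in>set L1. fst t > 0 \<and> snd t \<noteq> (0,0)" using pos by (auto simp: L1_def dest: in_set_takeD)
  have posR: "\<forall>t\<in>set R. fst t > 0 \<and> snd t \<noteq> (0,0)" using pos by (auto simp: R_def dest: in_set_dropD)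
  obtain N where N: "length N = s + 1" "\<forall>t\<in>set N. fst t > 0 \<and> snd t \<noteq> (0,0)"
      "\<forall>x y. F N (2*s) x y = F L1 (2*s) x y"
  proof -
    have h1: "honest L1" unfolding L1_def by (rule honest_take[OF hon])
    have l1: "length L1 = s + 2" using len by (simp add: L1_def)
    show ?thesis using gauss_forms[OF s1 h1 pos1 l1] that by blast
  qed
  define M0 where "M0 = N @ R"
  have posM0: "\<forall>t\<in>set M0. fst t > 0 \<and> snd t \<noteq> (0,0)" using N(2) posR by (auto simp: M0_def)
  obtain M where M: "honest M" "\<forall>t\<in>set M. fst t > 0 \<and> snd t \<noteq> (0,0)" "length M \<le> length M0"
      "\<forall>x y. F M (2*s) x y = F M0 (2*s) x y"
    using merge_pos[OF posM0, of s] by blast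
  show ?thesis
  proof (intro exI[of _ M] conjI)
    show "\<forall>x y. p x y = F M (2*s) x y"
      using rep M(4) N(3) by (simp add: M0_def F_append LL)
    show "honest M" by (rule M(1))
    show "\<forall>t\<in>set M. fst t > 0 \<and> snd t \<noteq> (0,0)" by (rule M(2))
    show "length M < length L" using M(3) N(1) len by (simp add: M0_def R_def)
  qed
qed

lemma sig_nz:
  assumes s1: "s \<ge> 1" and sig: "is_signature s p u"
  shows "\<exists>L. is_rep s p L \<and> honest L \<and> badge L = u \<and> (\<forall>t\<in>set L. snd t \<noteq> (0,0))"
proof -
  obtain L where L: "is_rep s p L" "honest L" "badge L = u"
    using sig unfolding is_signature_def badges_def by auto
  show ?thesis
  proof (cases "\<forall>t\<in>set L. snd t \<noteq> (0,0)")
    case True then show ?thesis using L by blast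
  next
    case False
    then obtain t where t: "t \<in> set L" "snd t = (0,0)" by blast
    have "length L < 2" using honest_nz[OF L(2) _ t(1)] t(2) by linarith
    moreover have "length L \<noteq> 0" using t(1) by auto
    ultimately have L1: "L = [t]" using t(1) by (cases L) auto
    have p0: "\<forall>x y. p x y = 0" using L(1) L1 t(2) s1 by (cases t) (auto simp: is_rep_def)
    have "is_rep s p []" using p0 by (simp add: is_rep_def)
    moreover have "honest []" by (simp add: honest_def)
    ultimately have "(0,0) \<in> badges s p" unfolding badges_def by (force simp: badge_def)
    moreover have "badge_le (0,0) u" by (simp add: badge_le_def)
    ultimately have "u = (0,0)" using sig unfolding is_signature_def by auto
    moreover have "fst t \<noteq> 0" using L(1) L1 by (simp add: is_rep_def)
    ultimately show ?thesis using L(3) L1 by (auto simp: badge_def split: if_splits)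
  qed
qed

definition ng :: "real \<times> real \<times> real \<Rightarrow> real \<times> real \<times> real" where
  "ng t = (- fst t, snd t)"

lemma F_ng: "F (map ng L) n x y = - F L n x y"
  by (induction L) (auto simp: F_def ng_def case_prod_beta)

lemma length_filter_card: "length (filter P xs) = card {i. i < length xs \<and> P (xs!i)}"
  by (rule length_filter_conv_card)

lemma bc_bound:
  assumes s1: "s \<ge> 1"
    and L1: "is_rep s p L1" "honest L1" "badge L1 = (a,b)" "\<forall>t\<in>set L1. snd t \<noteq> (0,0)"
    and L2: "is_rep s p L2" "honest L2" "badge L2 = (c,d)" "\<forall>t\<in>set L2. snd t \<noteq> (0,0)"
    and ac: "a > c"
  shows "b + c \<ge> s + 1"
proof (rule ccontr)
  assume "\<not> ?thesis"
  then have bcs: "b + c \<le> s" by simp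
  define L where "L = L1 @ map ng L2"
  have rel: "\<forall>x y. F L (2*s) x y = 0"
    using L1(1) L2(1) by (simp add: L_def F_append F_ng rep_F)
  define ks where "ks = map snd (filter (\<lambda>t. fst t < 0) L1) @ map snd (filter (\<lambda>t. fst t > 0) L2)"
  have lks: "length ks \<le> s" using L1(3) L2(3) bcs by (simp add: ks_def badge_def)
  have neg: "\<forall>(l,a',b')\<in>set L. l < 0 \<longrightarrow> (a',b') \<in> set ks"
    by (auto simp: L_def ks_def ng_def image_iff)
  define I1 where "I1 = {i. i < length L1 \<and> fst (L1!i) > 0}"
  define I2 where "I2 = {j. j < length L2 \<and> fst (L2!j) > 0}"
  have cI1: "card I1 = a" using L1(3) by (simp add: badge_def I1_def length_filter_card)
  have cI2: "card I2 = c" using L2(3) by (simp add: badge_def I2_def length_filter_card)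
  have ex: "\<exists>j\<in>I2. dt (snd (L1!i)) (snd (L2!j)) = 0" if i: "i \<in> I1" for i
  proof -
    obtain l0 a0 b0 where t0: "L1!i = (l0,a0,b0)" by (cases "L1!i") auto
    have mem: "(l0,a0,b0) \<in> set L" using i t0 by (auto simp: I1_def L_def) (metis nth_mem)
    have l0: "l0 > 0" using i t0 by (simp add: I1_def)
    have nz: "(a0,b0) \<noteq> (0,0)" using L1(4) i t0 by (metis I1_def mem_Collect_eq nth_mem snd_conv)
    obtain k where k: "k \<in> set ks" "a0 * snd k - b0 * fst k = 0"
      using parallel_killer[OF rel lks neg mem l0 nz] by blast
    have dk: "dt (snd (L1!i)) k = 0" using k(2) t0 by (simp add: dt_def)
    show ?thesis
    proof (cases "k \<in> set (map snd (filter (\<lambda>t. fst t < 0) L1))")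
      case True
      then obtain j where j: "j < length L1" "fst (L1!j) < 0" "k = snd (L1!j)"
        by (auto simp: in_set_conv_nth)
      have "j \<noteq> i" using j(2) i by (auto simp: I1_def)
      moreover have "snd (L1!j) \<noteq> (0,0)" using L1(4) j(1) by auto
      ultimately have "dt (snd (L1!i)) (snd (L1!j)) \<noteq> 0"
        using honest_dt[OF L1(2)] i j(1) by (auto simp: I1_def)
      then show ?thesis using dk j(3) by simp
    next
      case False
      then have "k \<in> set (map snd (filter (\<lambda>t. fst t > 0) L2))" using k(1) by (simp add: ks_def)
      then obtain j where j: "j < length L2" "fst (L2!j) > 0" "k = snd (L2!j)"
        by (auto simp: in_set_conv_nth)
      then show ?thesis using dk by (auto simp: I2_def)
    qed
  qed
  then obtain \<phi> where \<phi>: "\<And>i. i \<in> I1 \<Longrightarrow> \<phi> i \<in> I2 \<and> dt (snd (L1!i)) (snd (L2!(\<phi> i))) = 0"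
    by metis
  have "inj_on \<phi> I1"
  proof (rule inj_onI, rule ccontr)
    fix i1 i2 assume i: "i1 \<in> I1" "i2 \<in> I1" "\<phi> i1 = \<phi> i2" "i1 \<noteq> i2"
    have w: "snd (L2!(\<phi> i1)) \<noteq> (0,0)" using \<phi>[OF i(1)] L2(4) by (auto simp: I2_def)
    have "dt (snd (L1!i1)) (snd (L1!i2)) = 0"
      by (rule dt_trans[OF _ _ w]) (use \<phi>[OF i(1)] \<phi>[OF i(2)] i(3) in auto)
    moreover have "snd (L1!i2) \<noteq> (0,0)" using L1(4) i(2) by (auto simp: I1_def)
    ultimately show False using honest_dt[OF L1(2)] i by (auto simp: I1_def)
  qed
  moreover have "\<phi> ` I1 \<subseteq> I2" using \<phi> by auto
  moreover have "finite I2" by (simp add: I2_def)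
  ultimately have "card I1 \<le> card I2" by (rule card_inj_on_le)
  then show False using cI1 cI2 ac by simp
qed

lemma ng_ng[simp]: "map ng (map ng L) = L"
  by (induction L) (auto simp: ng_def)

lemma rep_neg: "is_rep s p L \<Longrightarrow> is_rep s (\<lambda>x y. - p x y) (map ng L)"
  by (simp add: rep_F F_ng) (auto simp: ng_def)

lemma honest_neg: "honest (map ng L) \<longleftrightarrow> honest L"
  unfolding honest_alt by (simp add: ng_def)

lemma badge_neg: "badge (map ng L) = (snd (badge L), fst (badge L))"
  by (simp add: badge_def filter_map o_def ng_def)

lemma badges_neg: "(b,a) \<in> badges s (\<lambda>x y. - p x y) \<longleftrightarrow> (a,b) \<in> badges s p"
proof
  assume "(a,b) \<in> badges s p"
  then obtain L where "is_rep s p L" "honest L" "badge L = (a,b)" unfolding badges_def by auto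
  then show "(b,a) \<in> badges s (\<lambda>x y. - p x y)" unfolding badges_def
    using rep_neg honest_neg badge_neg by (metis (mono_tags, lifting) fst_conv mem_Collect_eq snd_conv)
next
  assume "(b,a) \<in> badges s (\<lambda>x y. - p x y)"
  then obtain L where L: "is_rep s (\<lambda>x y. - p x y) L" "honest L" "badge L = (b,a)" unfolding badges_def by auto
  have "is_rep s p (map ng L)" using rep_neg[OF L(1)] by simp
  then show "(a,b) \<in> badges s p" unfolding badges_def
    using L honest_neg badge_neg by (metis (mono_tags, lifting) fst_conv mem_Collect_eq snd_conv)
qed

lemma sig_neg: "is_signature s p (a,b) \<Longrightarrow> is_signature s (\<lambda>x y. - p x y) (b,a)"
  unfolding is_signature_def badge_le_def
  by (metis badges_neg fst_conv prod.collapse snd_conv)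

lemma core:
  assumes s1: "s \<ge> 1" and sab: "is_signature s p (a,b)" and scd: "is_signature s p (c,d)"
    and ac: "a > c" and bd: "b < d"
  shows "b + c \<ge> s + 1 \<and> b \<ge> 1"
proof -
  obtain L1 where L1: "is_rep s p L1" "honest L1" "badge L1 = (a,b)" "\<forall>t\<in>set L1. snd t \<noteq> (0,0)"
    using sig_nz[OF s1 sab] by blast
  obtain L2 where L2: "is_rep s p L2" "honest L2" "badge L2 = (c,d)" "\<forall>t\<in>set L2. snd t \<noteq> (0,0)"
    using sig_nz[OF s1 scd] by blast
  have bc: "b + c \<ge> s + 1" by (rule bc_bound[OF s1 L1 L2 ac])
  have "b \<ge> 1"
  proof (rule ccontr)
    assume "\<not> b \<ge> 1"
    then have b0: "b = 0" by simp
    have nz: "\<forall>t\<in>set L1. fst t \<noteq> 0" using L1(1) by (simp add: rep_F)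
    have "filter (\<lambda>t. fst t < 0) L1 = []" using L1(3) b0 by (simp add: badge_def)
    then have "\<forall>t\<in>set L1. \<not> fst t < 0" by (simp add: filter_empty_conv)
    then have pos: "\<forall>t\<in>set L1. fst t > 0 \<and> snd t \<noteq> (0,0)" using nz L1(4) by force
    have aL: "a = length L1" using badge_pos[of L1] pos L1(3) by simp
    have lenL: "length L1 \<ge> s + 2" using bc b0 ac aL by simp
    have rep: "\<forall>x y. p x y = F L1 (2*s) x y" using L1(1) by (simp add: rep_F)
    obtain M where M: "\<forall>x y. p x y = F M (2*s) x y" "honest M"
        "\<forall>t\<in>set M. fst t > 0 \<and> snd t \<noteq> (0,0)" "length M < length L1"
      using reduce[OF s1 rep L1(2) pos lenL] by blast
    have "is_rep s p M" using M(1,3) by (auto simp: rep_F)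
    then have "(length M, 0) \<in> badges s p" using M(2) badge_pos[of M] M(3) unfolding badges_def by (metis (mono_tags, lifting) mem_Collect_eq)
    moreover have "badge_le (length M, 0) (a, b)" using M(4) aL b0 by (simp add: badge_le_def)
    ultimately have "(length M, 0) = (a,b)" using sab unfolding is_signature_def by blast
    then show False using M(4) aL by simp
  qed
  with bc show ?thesis by simp
qed

theorem theorem3p2:
  fixes s :: nat and p :: "real \<Rightarrow> real \<Rightarrow> real" and a b c d :: nat
  assumes "s \<ge> 1" and "binary_form (2 * s) p"
    and "is_signature s p (a, b)" and "is_signature s p (c, d)"
    and "a > c" and "b < d"
  shows "a + d \<ge> s + 3 \<and> b + c \<ge> s + 1 \<and> max (a + b) (c + d) \<ge> s + 2 \<and>
         a \<ge> 1 \<and> b \<ge> 1 \<and> c \<ge> 1 \<and> d \<ge> 1"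
proof -
  have c1: "b + c \<ge> s + 1 \<and> b \<ge> 1" by (rule core[OF assms(1,3,4,5,6)])
  have c2: "c + b \<ge> s + 1 \<and> c \<ge> 1"
    by (rule core[OF assms(1) sig_neg[OF assms(4)] sig_neg[OF assms(3)]]) (use assms(5,6) in auto)
  show ?thesis using c1 c2 assms(5,6) by (auto simp: max_def)
qed


end
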